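(* Let $\alpha$ be an action of a countable group $G$ on $L_1[0,1]$ by lattice (positive) linear isometries, and consider the induced action of $G$ on $[0,1]$ by measure-class preserving measurable bijections (so that $\alpha(g)f(x)=\frac{d g_*\lambda}{d\lambda}(x) f(g^{-1}x)$). Suppose this action on $[0,1]$ admits a measurable fundamental domain, i.e. a measurable set $A\subseteq[0,1]$ such that $\lambda(gA\cap hA)=0$ for $g\neq h\in G$ and $\lambda\big([0,1]\triangle\bigcup_{g\in G} gA\big)=0$, where $\lambda$ is Lebesgue measure. Then there is an equivalent strictly convex $G$-invariant norm on $L_1[0,1]$.
   Context: A norm $\|\cdot\|'$ is $G$-invariant if $\|\alpha(g)f\|'=\|f\|'$ for all $g\in G$, $f\in L_1[0,1]$; it is strictly convex if for every $x\neq y$ with $\|x\|'=\|y\|'$ one has $\|\frac{x+y}{2}\|'<\|x\|'$. *)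

theory Defs
  imports "HOL-Analysis.Analysis" "HOL-Algebra.Group"
begin

definition lam01 :: "real measure" where
  "lam01 = lebesgue_on {0..1}"

definition L1norm :: "(real \<Rightarrow> real) \<Rightarrow> real" where
  "L1norm f = (LINT x|lam01. \<bar>f x\<bar>)"

definition induced_op ::
  "('g, 'b) monoid_scheme \<Rightarrow> ('g \<Rightarrow> real \<Rightarrow> real) \<Rightarrow> 'g \<Rightarrow> (real \<Rightarrow> real) \<Rightarrow> real \<Rightarrow> real" where
  "induced_op G T g f x =
     enn2real (RN_deriv lam01 (distr lam01 lam01 (T g)) x) * f (T (inv\<^bsub>G\<^esub> g) x)"

definition mcp_action :: "('g, 'b) monoid_scheme \<Rightarrow> ('g \<Rightarrow> real \<Rightarrow> real) \<Rightarrow> bool" where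
  "mcp_action G T \<longleftrightarrow>
     (\<forall>g\<in>carrier G. bij_betw (T g) {0..1} {0..1} \<and> T g \<in> lam01 \<rightarrow>\<^sub>M lam01 \<and>
        (\<forall>N\<in>sets lam01. emeasure lam01 N = 0 \<longleftrightarrow> emeasure lam01 (T g ` N) = 0)) \<and>
     (\<forall>x\<in>{0..1}. T \<one>\<^bsub>G\<^esub> x = x) \<and>
     (\<forall>g\<in>carrier G. \<forall>h\<in>carrier G. \<forall>x\<in>{0..1}. T (g \<otimes>\<^bsub>G\<^esub> h) x = T g (T h x))"

definition fundamental_domain ::
  "('g, 'b) monoid_scheme \<Rightarrow> ('g \<Rightarrow> real \<Rightarrow> real) \<Rightarrow> real set \<Rightarrow> bool" where
  "fundamental_domain G T A \<longleftrightarrow>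
     A \<in> sets lam01 \<and>
     (\<forall>g\<in>carrier G. \<forall>h\<in>carrier G. g \<noteq> h \<longrightarrow> emeasure lam01 (T g ` A \<inter> T h ` A) = 0) \<and>
     emeasure lam01 (({0..1} - (\<Union>g\<in>carrier G. T g ` A)) \<union> ((\<Union>g\<in>carrier G. T g ` A) - {0..1})) = 0"

end

theory Submission
  imports Defs
begin


lemma space_lam01[simp]: "space lam01 = {0..1}" unfolding lam01_def by simp

lemma sets_lam01: "B \<in> sets lam01 \<longleftrightarrow> B \<subseteq> {0..1} \<and> B \<in> sets lebesgue"
  unfolding lam01_def by (auto simp: sets_restrict_space)

lemma finite_measure_lam01: "finite_measure lam01"
proof -
  have "emeasure lebesgue {0..1::real} = 1" by simp
  then show ?thesis unfolding lam01_def
    by (intro finite_measureI) (auto simp: emeasure_restrict_space)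
qed

interpretation lam: finite_measure lam01 by (rule finite_measure_lam01)


lemma integrable_ind_mult:
  fixes f :: "'a \<Rightarrow> real"
  shows "A \<in> sets M \<Longrightarrow> integrable M f \<Longrightarrow> integrable M (\<lambda>x. indicator A x * f x)"
  using integrable_mult_indicator[of A M f] by simp

lemma borel_rat: "sets (borel::real measure) = sigma_sets UNIV (atMost ` \<rat>)"
proof -
  have "sets (borel::real measure) = sigma_sets UNIV (range atMost)"
    by (subst borel_eq_atMost) (simp add: sets_measure_of)
  also have "\<dots> = sigma_sets UNIV (atMost ` \<rat>)"
  proof (rule sigma_sets_eqI)
    fix b assume "b \<in> atMost ` (\<rat>::real set)" then show "b \<in> sigma_sets UNIV (range atMost)" by auto
  next
    fix a :: "real set" assume "a \<in> range atMost"
    then obtain x where ax: "a = {..x}" by auto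
    have "\<forall>n::nat. \<exists>r\<in>\<rat>. x < r \<and> r < x + 1 / (real n + 1)"
      by (intro allI Rats_dense_in_real) (simp add: add_pos_pos)
    then obtain q where q: "\<And>n. q n \<in> \<rat>" "\<And>n. x < q n" "\<And>n. q n < x + 1 / (real n + 1)"
      by metis
    have eq: "{..x} = (\<Inter>n. {..q n})"
    proof (auto)
      fix y n assume "y \<le> x" then show "y \<le> q n" using q(2)[of n] by simp
    next
      fix y assume H: "\<forall>n. y \<le> q n"
      show "y \<le> x"
      proof (rule ccontr)
        assume "\<not> y \<le> x"
        then have "0 < y - x" by simp
        then obtain n :: nat where "1 / (y - x) < real n + 1"
          using reals_Archimedean2[of "1 / (y - x)"] by (metis add.commute less_add_one order.strict_trans)
        then have "1 / (real n + 1) < y - x"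
          using \<open>0 < y - x\<close> by (simp add: field_simps)
        moreover have "y \<le> q n" using H by blast
        ultimately show False using q(3)[of n] by linarith
      qed
    qed
    show "a \<in> sigma_sets UNIV (atMost ` \<rat>)"
      unfolding ax eq by (rule sigma_sets_Inter) (use q(1) in auto)
  qed
  finally show ?thesis .
qed

lemma inj_lborel:
  fixes v :: "real \<Rightarrow> real"
  assumes vm: "v \<in> borel_measurable borel" and vi: "integrable lborel v"
    and z: "\<And>q. q \<in> \<rat> \<Longrightarrow> (\<integral>x. indicator {..q} x * v x \<partial>lborel) = 0"
  shows "AE x in lborel. v x = 0"
proof -
  define p where "p = (\<lambda>x. ennreal (max 0 (v x)))"
  define m where "m = (\<lambda>x. ennreal (max 0 (- v x)))"
  have pm[measurable]: "p \<in> borel_measurable borel" "m \<in> borel_measurable borel"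
    unfolding p_def m_def using vm by auto
  have ip: "integrable lborel (\<lambda>x. max 0 (v x))" "integrable lborel (\<lambda>x. max 0 (- v x))"
    using vi by auto
  have em: "emeasure (density lborel p) B = ennreal (\<integral>x. indicator B x * max 0 (v x) \<partial>lborel)"
    "emeasure (density lborel m) B = ennreal (\<integral>x. indicator B x * max 0 (- v x) \<partial>lborel)"
    if B: "B \<in> sets borel" for B
  proof -
    have "emeasure (density lborel p) B = (\<integral>\<^sup>+x. ennreal (indicator B x * max 0 (v x)) \<partial>lborel)"
      using B pm by (subst emeasure_density) (auto simp: p_def intro!: nn_integral_cong split: split_indicator)
    also have "\<dots> = ennreal (\<integral>x. indicator B x * max 0 (v x) \<partial>lborel)"
      using B ip by (intro nn_integral_eq_integral integrable_ind_mult) auto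
    finally show "emeasure (density lborel p) B = ennreal (\<integral>x. indicator B x * max 0 (v x) \<partial>lborel)" .
    have "emeasure (density lborel m) B = (\<integral>\<^sup>+x. ennreal (indicator B x * max 0 (- v x)) \<partial>lborel)"
      using B pm by (subst emeasure_density) (auto simp: m_def intro!: nn_integral_cong split: split_indicator)
    also have "\<dots> = ennreal (\<integral>x. indicator B x * max 0 (- v x) \<partial>lborel)"
      using B ip by (intro nn_integral_eq_integral integrable_ind_mult) auto
    finally show "emeasure (density lborel m) B = ennreal (\<integral>x. indicator B x * max 0 (- v x) \<partial>lborel)" .
  qed
  have "density lborel p = density lborel m"
  proof (rule measure_eqI_generator_eq[where \<Omega>=UNIV and E="atMost ` \<rat>" and A="\<lambda>i. {..real i}"])
    show "Int_stable (atMost ` (\<rat>::real set))"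
      unfolding Int_stable_def by (auto simp: image_iff min_def) 
    show "atMost ` (\<rat>::real set) \<subseteq> Pow UNIV" by simp
    show "sets (density lborel p) = sigma_sets UNIV (atMost ` \<rat>)"
      "sets (density lborel m) = sigma_sets UNIV (atMost ` \<rat>)"
      using borel_rat by auto
    show "range (\<lambda>i. {..real i}) \<subseteq> atMost ` \<rat>" by auto
    show "(\<Union>i. {..real i}) = UNIV" by (auto simp: real_arch_simple)
    show "emeasure (density lborel p) {..real i} \<noteq> \<infinity>" for i
      using em(1)[of "{..real i}"] by simp
  next
    fix X assume "X \<in> atMost ` (\<rat>::real set)"
    then obtain q where q: "q \<in> \<rat>" "X = {..q}" by auto
    have "(\<integral>x. indicator X x * v x \<partial>lborel) =
      (\<integral>x. indicator X x * max 0 (v x) - indicator X x * max 0 (- v x) \<partial>lborel)"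
      by (intro Bochner_Integration.integral_cong) (auto simp: max_def)
    also have "\<dots> = (\<integral>x. indicator X x * max 0 (v x) \<partial>lborel) - (\<integral>x. indicator X x * max 0 (- v x) \<partial>lborel)"
      using ip q by (intro Bochner_Integration.integral_diff integrable_ind_mult) auto
    finally show "emeasure (density lborel p) X = emeasure (density lborel m) X"
      using z[OF q(1)] q em[of X] by simp
  qed
  then have "AE x in lborel. p x = m x"
    using finite_density_unique[of p lborel m] pm ip
    by (auto simp: p_def nn_integral_eq_integral)
  then show ?thesis
    by eventually_elim (auto simp: p_def m_def max_def split: if_splits)
qed



lemma inj_lam01:
  fixes u :: "real \<Rightarrow> real"
  assumes ui: "integrable lam01 u"
    and z: "\<And>q. q \<in> \<rat> \<Longrightarrow> (\<integral>x. indicator {..q} x * u x \<partial>lam01) = 0"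
  shows "AE x in lam01. u x = 0"
proof -
  define v0 where "v0 = (\<lambda>x. indicator {0..1::real} x * u x)"
  have S: "{0..1::real} \<inter> space lebesgue \<in> sets lebesgue" by simp
  have v0i: "integrable lebesgue v0"
    using ui unfolding lam01_def v0_def integrable_restrict_space[OF S] by simp
  have "v0 \<in> borel_measurable lebesgue" using v0i by auto
  from completion_ex_borel_measurable_real[OF this]
  obtain w where wm: "w \<in> borel_measurable lborel" and vw: "AE x in lborel. v0 x = w x" by auto
  have vw': "AE x in lebesgue. v0 x = w x" using vw by (simp add: AE_completion_iff)
  have wmL: "w \<in> borel_measurable lebesgue" using wm by (auto intro: measurable_completion)
  have wi': "integrable lebesgue w" using integrable_cong_AE_imp[OF v0i wmL vw'] .
  then have wi: "integrable lborel w" using wm by (simp add: integrable_completion)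
  have "AE x in lborel. w x = 0"
  proof (rule inj_lborel)
    show "w \<in> borel_measurable borel" using wm by simp
    show "integrable lborel w" by fact
    fix q :: real assume q: "q \<in> \<rat>"
    have "(\<integral>x. indicator {..q} x * w x \<partial>lborel) = (\<integral>x. indicator {..q} x * w x \<partial>lebesgue)"
      using wm by (simp add: integral_completion)
    also have "\<dots> = (\<integral>x. indicator {..q} x * v0 x \<partial>lebesgue)"
    proof (rule integral_cong_AE)
      have qs: "{..q} \<in> sets lebesgue" by (intro sets_completionI_sets) simp
      show "(\<lambda>x. indicator {..q} x * w x) \<in> borel_measurable lebesgue"
        using wmL qs by (intro borel_measurable_times borel_measurable_indicator)
      show "(\<lambda>x. indicator {..q} x * v0 x) \<in> borel_measurable lebesgue"
        using v0i qs by (intro borel_measurable_times borel_measurable_indicator) auto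
    qed (use vw' in \<open>auto elim: AE_mp\<close>)
    also have "\<dots> = (\<integral>x. indicator {..q} x * u x \<partial>lam01)"
      unfolding lam01_def integral_restrict_space[OF S] v0_def by (simp add: mult_ac)
    finally show "(\<integral>x. indicator {..q} x * w x \<partial>lborel) = 0" using z[OF q] by simp
  qed
  then have "AE x in lebesgue. v0 x = 0" using vw' by (simp add: AE_completion_iff) (auto elim: AE_mp)
  then show ?thesis unfolding lam01_def
    by (subst AE_restrict_space_iff[OF S]) (auto simp: v0_def elim: AE_mp)
qed



definition rho :: "('g \<Rightarrow> real \<Rightarrow> real) \<Rightarrow> 'g \<Rightarrow> real \<Rightarrow> real" where
  "rho T g x = enn2real (RN_deriv lam01 (distr lam01 lam01 (T g)) x)"

lemma induced_op_eq: "induced_op G T g f x = rho T g x * f (T (inv\<^bsub>G\<^esub> g) x)"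
  unfolding induced_op_def rho_def by simp

lemma rho_nonneg: "rho T g x \<ge> 0" unfolding rho_def by simp

definition qs :: "nat \<Rightarrow> real" where "qs n = from_nat_into \<rat> n"

lemma qs_surj: "q \<in> \<rat> \<Longrightarrow> \<exists>n. qs n = q"
  unfolding qs_def by (rule from_nat_into_surj[OF countable_rat])

definition LL :: "('g \<Rightarrow> real \<Rightarrow> real) \<Rightarrow> real set \<Rightarrow> 'g \<Rightarrow> nat \<Rightarrow> (real \<Rightarrow> real) \<Rightarrow> real" where
  "LL T A k n f = (\<integral>y. indicator (A \<inter> {..qs n}) (T k y) * f y \<partial>lam01)"

definition tm :: "('g \<Rightarrow> real \<Rightarrow> real) \<Rightarrow> real set \<Rightarrow> (real \<Rightarrow> real) \<Rightarrow> 'g \<times> nat \<Rightarrow> real" where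
  "tm T A f = (\<lambda>(k, n). (1/2::real)^n * (LL T A k n f)^2)"

definition QQ :: "('g, 'b) monoid_scheme \<Rightarrow> ('g \<Rightarrow> real \<Rightarrow> real) \<Rightarrow> real set \<Rightarrow> (real \<Rightarrow> real) \<Rightarrow> real" where
  "QQ G T A f = infsum (tm T A f) (carrier G \<times> UNIV)"

definition NN :: "('g, 'b) monoid_scheme \<Rightarrow> ('g \<Rightarrow> real \<Rightarrow> real) \<Rightarrow> real set \<Rightarrow> (real \<Rightarrow> real) \<Rightarrow> real" where
  "NN G T A f = sqrt ((L1norm f)^2 + QQ G T A f)"

lemma tm_nonneg: "tm T A f i \<ge> 0" unfolding tm_def by (auto split: prod.splits)

locale fdact =
  fixes G :: "('g, 'b) monoid_scheme" (structure) and T :: "'g \<Rightarrow> real \<Rightarrow> real" and A :: "real set"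
  assumes grp: "group G" and cnt: "countable (carrier G)"
    and mcp: "mcp_action G T"
    and fd: "fundamental_domain G T A"
begin

interpretation group G by (rule grp)

lemma T_range: "g \<in> carrier G \<Longrightarrow> x \<in> {0..1} \<Longrightarrow> T g x \<in> {0..1}"
  using mcp unfolding mcp_action_def bij_betw_def by blast

lemma T_meas: "g \<in> carrier G \<Longrightarrow> T g \<in> lam01 \<rightarrow>\<^sub>M lam01"
  using mcp unfolding mcp_action_def by blast

lemma T_null: "g \<in> carrier G \<Longrightarrow> N \<in> sets lam01 \<Longrightarrow> emeasure lam01 N = 0 \<longleftrightarrow> emeasure lam01 (T g ` N) = 0"
  using mcp unfolding mcp_action_def by blast

lemma T_one: "x \<in> {0..1} \<Longrightarrow> T \<one> x = x"
  using mcp unfolding mcp_action_def by blast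

lemma T_mult: "g \<in> carrier G \<Longrightarrow> h \<in> carrier G \<Longrightarrow> x \<in> {0..1} \<Longrightarrow> T (g \<otimes> h) x = T g (T h x)"
  using mcp unfolding mcp_action_def by blast

lemma T_inv1: "g \<in> carrier G \<Longrightarrow> x \<in> {0..1} \<Longrightarrow> T (inv g) (T g x) = x"
  by (metis T_mult T_one inv_closed l_inv)

lemma T_inv2: "g \<in> carrier G \<Longrightarrow> x \<in> {0..1} \<Longrightarrow> T g (T (inv g) x) = x"
  by (metis T_mult T_one inv_closed r_inv)

lemma T_preimage: "g \<in> carrier G \<Longrightarrow> B \<subseteq> {0..1} \<Longrightarrow> T g -` B \<inter> {0..1} = T (inv g) ` B"
  apply (auto simp: image_iff)
   apply (metis T_inv1 atLeastAtMost_iff)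
  using T_range[of "inv g"] by (auto simp: T_inv2)

lemma T_image_sets: "g \<in> carrier G \<Longrightarrow> B \<in> sets lam01 \<Longrightarrow> T g ` B \<in> sets lam01"
proof -
  assume g: "g \<in> carrier G" and B: "B \<in> sets lam01"
  have "T (inv g) -` B \<inter> space lam01 \<in> sets lam01"
    using T_meas[of "inv g"] g B by (intro measurable_sets[where A=lam01]) auto
  moreover have "T (inv g) -` B \<inter> space lam01 = T g ` B"
    using T_preimage[of "inv g" B] g B by (auto simp: sets_lam01 inv_inv)
  ultimately show ?thesis by simp
qed

definition nu where "nu g = distr lam01 lam01 (T g)"

lemma ac: "g \<in> carrier G \<Longrightarrow> absolutely_continuous lam01 (nu g)"
  unfolding absolutely_continuous_def
proof
  fix N assume g: "g \<in> carrier G" and N: "N \<in> null_sets lam01"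
  have Ns: "N \<in> sets lam01" "emeasure lam01 N = 0" using N by auto
  have "emeasure (nu g) N = emeasure lam01 (T g -` N \<inter> space lam01)"
    unfolding nu_def using T_meas[OF g] Ns by (simp add: emeasure_distr)
  also have "\<dots> = emeasure lam01 (T (inv g) ` N)"
    using T_preimage[OF g, of N] Ns by (simp add: sets_lam01)
  also have "\<dots> = 0" using T_null[of "inv g" N] g Ns by simp
  finally show "N \<in> null_sets (nu g)" using Ns by (simp add: nu_def null_sets_def)
qed

lemma sets_nu: "sets (nu g) = sets lam01" unfolding nu_def by simp

lemma sfin_nu: "g \<in> carrier G \<Longrightarrow> sigma_finite_measure (nu g)"
  unfolding nu_def using lam.finite_measure_distr[OF T_meas]
  by (simp add: finite_measure_def)

lemma CV:
  assumes g: "g \<in> carrier G" and F: "F \<in> borel_measurable lam01"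
  shows "integrable lam01 (\<lambda>x. rho T g x * F x) \<longleftrightarrow> integrable lam01 (\<lambda>y. F (T g y))"
    and "(\<integral>x. rho T g x * F x \<partial>lam01) = (\<integral>y. F (T g y) \<partial>lam01)"
proof -
  have "integrable (nu g) F \<longleftrightarrow> integrable lam01 (\<lambda>x. rho T g x * F x)"
    using lam.RN_deriv_integrable[OF sfin_nu[OF g] ac[OF g] sets_nu F]
    unfolding rho_def nu_def by simp
  moreover have "integrable (nu g) F \<longleftrightarrow> integrable lam01 (\<lambda>y. F (T g y))"
    unfolding nu_def using T_meas[OF g] F by (simp add: integrable_distr_eq)
  ultimately show "integrable lam01 (\<lambda>x. rho T g x * F x) \<longleftrightarrow> integrable lam01 (\<lambda>y. F (T g y))" by simp
  have "integral\<^sup>L (nu g) F = (\<integral>x. rho T g x * F x \<partial>lam01)"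
    using lam.RN_deriv_integral[OF sfin_nu[OF g] ac[OF g] sets_nu F]
    unfolding rho_def nu_def by simp
  moreover have "integral\<^sup>L (nu g) F = (\<integral>y. F (T g y) \<partial>lam01)"
    unfolding nu_def using T_meas[OF g] F by (simp add: integral_distr)
  ultimately show "(\<integral>x. rho T g x * F x \<partial>lam01) = (\<integral>y. F (T g y) \<partial>lam01)" by simp
qed


lemma A_sets: "A \<in> sets lam01" using fd unfolding fundamental_domain_def by blast

lemma A_sub: "A \<subseteq> {0..1}" using A_sets by (simp add: sets_lam01)

lemma C_sets: "A \<inter> {..q} \<in> sets lam01"
proof -
  have "A \<inter> {..q} \<in> sets lebesgue" using A_sets
    by (intro sets.Int) (auto simp: sets_lam01 intro: sets_completionI_sets)
  then show ?thesis using A_sub by (auto simp: sets_lam01)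
qed

lemma ind_meas: "k \<in> carrier G \<Longrightarrow> B \<in> sets lam01 \<Longrightarrow> (\<lambda>y. indicator B (T k y) :: real) \<in> borel_measurable lam01"
  by (rule measurable_compose[OF T_meas borel_measurable_indicator])

lemma comp_meas: "k \<in> carrier G \<Longrightarrow> (f :: real \<Rightarrow> real) \<in> borel_measurable lam01 \<Longrightarrow> (\<lambda>y. f (T k y)) \<in> borel_measurable lam01"
  by (rule measurable_compose[OF T_meas])

lemma ind_int:
  fixes f :: "real \<Rightarrow> real"
  assumes "k \<in> carrier G" "B \<in> sets lam01" "integrable lam01 f"
  shows "integrable lam01 (\<lambda>y. indicator B (T k y) * f y)"
proof (rule Bochner_Integration.integrable_bound[OF assms(3)])
  show "(\<lambda>y. indicator B (T k y) * f y) \<in> borel_measurable lam01"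
    using ind_meas[OF assms(1,2)] assms(3) by (intro borel_measurable_times) auto
qed (auto simp: indicator_def)

lemma induced_fun: "induced_op G T h f = (\<lambda>x. rho T h x * f (T (inv h) x))"
  by (rule ext) (simp add: induced_op_eq)

lemma induced_int:
  assumes h: "h \<in> carrier G" and f: "integrable lam01 f"
  shows "integrable lam01 (induced_op G T h f)"
proof -
  have fm: "f \<in> borel_measurable lam01" using f by auto
  have hi: "inv h \<in> carrier G" using h by simp
  have "integrable lam01 (\<lambda>y. f (T (inv h) (T h y))) \<longleftrightarrow> integrable lam01 f"
    by (intro Bochner_Integration.integrable_cong) (auto simp: T_inv1[OF h])
  then have "integrable lam01 (\<lambda>y. f (T (inv h) (T h y)))" using f by simp
  then show ?thesis unfolding induced_fun
    using CV(1)[OF h comp_meas[OF hi fm]] by simp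
qed

lemma L1_induced:
  assumes h: "h \<in> carrier G" and f: "integrable lam01 f"
  shows "L1norm (induced_op G T h f) = L1norm f"
proof -
  have fm: "f \<in> borel_measurable lam01" using f by auto
  have hi: "inv h \<in> carrier G" using h by simp
  have m: "(\<lambda>x. \<bar>f (T (inv h) x)\<bar>) \<in> borel_measurable lam01"
    using comp_meas[OF hi fm] by (rule borel_measurable_abs)
  have "L1norm (induced_op G T h f) = (\<integral>x. rho T h x * \<bar>f (T (inv h) x)\<bar> \<partial>lam01)"
    unfolding L1norm_def induced_fun by (simp add: abs_mult rho_nonneg)
  also have "\<dots> = (\<integral>y. \<bar>f (T (inv h) (T h y))\<bar> \<partial>lam01)"
    using CV(2)[OF h m] by simp
  also have "\<dots> = L1norm f" unfolding L1norm_def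
    by (intro Bochner_Integration.integral_cong) (auto simp: T_inv1[OF h])
  finally show ?thesis .
qed

lemma LL_induced:
  assumes h: "h \<in> carrier G" and k: "k \<in> carrier G" and f: "integrable lam01 f"
  shows "LL T A k n (induced_op G T h f) = LL T A (k \<otimes> h) n f"
proof -
  let ?C = "A \<inter> {..qs n}"
  have C: "?C \<in> sets lam01" by (rule C_sets)
  have fm: "f \<in> borel_measurable lam01" using f by auto
  have hi: "inv h \<in> carrier G" using h by simp
  have m: "(\<lambda>x. indicator ?C (T k x) * f (T (inv h) x)) \<in> borel_measurable lam01"
    using ind_meas[OF k C] comp_meas[OF hi fm] by (rule borel_measurable_times)
  have "LL T A k n (induced_op G T h f) = (\<integral>x. rho T h x * (indicator ?C (T k x) * f (T (inv h) x)) \<partial>lam01)"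
    unfolding LL_def induced_fun by (simp add: mult_ac)
  also have "\<dots> = (\<integral>y. indicator ?C (T k (T h y)) * f (T (inv h) (T h y)) \<partial>lam01)"
    using CV(2)[OF h m] by simp
  also have "\<dots> = LL T A (k \<otimes> h) n f" unfolding LL_def
    by (intro Bochner_Integration.integral_cong) (auto simp: T_inv1[OF h] T_mult[OF k h])
  finally show ?thesis .
qed


definition cc :: "'g \<Rightarrow> (real \<Rightarrow> real) \<Rightarrow> real" where
  "cc k f = (\<integral>y. indicator A (T k y) * \<bar>f y\<bar> \<partial>lam01)"

lemma cc_nonneg: "cc k f \<ge> 0" unfolding cc_def by (intro integral_nonneg_AE) auto

lemma int_abs: "integrable lam01 f \<Longrightarrow> integrable lam01 (\<lambda>y. \<bar>f y :: real\<bar>)" by auto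

lemma cc_le:
  assumes k: "k \<in> carrier G" and f: "integrable lam01 f"
  shows "cc k f \<le> L1norm f"
  unfolding cc_def L1norm_def
  using ind_int[OF k A_sets int_abs[OF f]] int_abs[OF f]
  by (intro integral_mono) (auto simp: indicator_def)

lemma LL_bound:
  assumes k: "k \<in> carrier G" and f: "integrable lam01 f"
  shows "\<bar>LL T A k n f\<bar> \<le> cc k f"
  unfolding LL_def cc_def
  using ind_int[OF k C_sets f] ind_int[OF k A_sets int_abs[OF f]]
  by (intro integral_abs_bound_integral) (auto simp: indicator_def abs_mult)

lemma disj_AE:
  assumes k: "k \<in> carrier G" and k': "k' \<in> carrier G" and kk: "k \<noteq> k'"
  shows "AE y in lam01. \<not> (T k y \<in> A \<and> T k' y \<in> A)"
proof -
  interpret group G by (rule grp)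
  let ?E = "T (inv k) ` A \<inter> T (inv k') ` A"
  have E: "?E \<in> sets lam01" using T_image_sets A_sets k k' by (intro sets.Int) auto
  have "inv k \<noteq> inv k'" using k k' kk by (metis inv_inv)
  then have "emeasure lam01 ?E = 0" using fd k k' unfolding fundamental_domain_def by auto
  then have "?E \<in> null_sets lam01" using E by auto
  from AE_not_in[OF this] show ?thesis
  proof (rule AE_mp[OF _ AE_I2])
    fix y assume y: "y \<in> space lam01"
    show "y \<notin> ?E \<longrightarrow> \<not> (T k y \<in> A \<and> T k' y \<in> A)"
    proof (intro impI notI)
      assume "y \<notin> ?E" and "T k y \<in> A \<and> T k' y \<in> A"
      moreover have "y = T (inv k) (T k y)" "y = T (inv k') (T k' y)"
        using y T_inv1 k k' by auto
      ultimately show False by (metis IntI image_eqI)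
    qed
  qed
qed

lemma sum_cc:
  assumes F: "finite F" "F \<subseteq> carrier G" and f: "integrable lam01 f"
  shows "(\<Sum>k\<in>F. cc k f) \<le> L1norm f"
proof -
  have ii: "\<And>k. k \<in> F \<Longrightarrow> integrable lam01 (\<lambda>y. indicator A (T k y) * \<bar>f y\<bar>)"
    using ind_int[OF _ A_sets int_abs[OF f]] F by auto
  have "(\<Sum>k\<in>F. cc k f) = (\<integral>y. (\<Sum>k\<in>F. indicator A (T k y) * \<bar>f y\<bar>) \<partial>lam01)"
    unfolding cc_def using ii by (simp add: Bochner_Integration.integral_sum)
  also have "\<dots> \<le> (\<integral>y. \<bar>f y\<bar> \<partial>lam01)"
  proof (rule integral_mono_AE)
    show "integrable lam01 (\<lambda>y. \<Sum>k\<in>F. indicator A (T k y) * \<bar>f y\<bar>)" using ii by auto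
    show "integrable lam01 (\<lambda>y. \<bar>f y\<bar>)" using f by auto
    have "AE y in lam01. \<forall>k\<in>F. \<forall>k'\<in>F. k \<noteq> k' \<longrightarrow> \<not> (T k y \<in> A \<and> T k' y \<in> A)"
      using F disj_AE by (subst AE_ball_countable, simp add: countable_finite)+ auto
    then show "AE y in lam01. (\<Sum>k\<in>F. indicator A (T k y) * \<bar>f y\<bar>) \<le> \<bar>f y\<bar>"
    proof (rule AE_mp[OF _ AE_I2], intro impI)
      fix y assume H: "\<forall>k\<in>F. \<forall>k'\<in>F. k \<noteq> k' \<longrightarrow> \<not> (T k y \<in> A \<and> T k' y \<in> A)"
      have "(\<Sum>k\<in>F. indicator A (T k y) :: real) = (\<Sum>k\<in>F. indicator {k. T k y \<in> A} k)"
        by (intro sum.cong) (auto simp: indicator_def)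
      also have "\<dots> = real (card (F \<inter> {k. T k y \<in> A}))"
        using F(1) by (simp add: indicator_def sum.If_cases Int_def)
      also have "\<dots> \<le> 1"
      proof -
        have "card (F \<inter> {k. T k y \<in> A}) \<le> Suc 0"
          using F(1) H by (subst card_le_Suc0_iff_eq) auto
        then show ?thesis by simp
      qed
      finally have "(\<Sum>k\<in>F. indicator A (T k y) :: real) \<le> 1" .
      then have "(\<Sum>k\<in>F. indicator A (T k y)) * \<bar>f y\<bar> \<le> 1 * \<bar>f y\<bar>"
        by (intro mult_right_mono) auto
      then show "(\<Sum>k\<in>F. indicator A (T k y) * \<bar>f y\<bar>) \<le> \<bar>f y\<bar>"
        by (simp add: sum_distrib_right)
    qed
  qed
  finally show ?thesis unfolding L1norm_def .
qed

lemma tm_bound: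
  assumes k: "k \<in> carrier G" and f: "integrable lam01 f"
  shows "tm T A f (k, n) \<le> (1/2)^n * (L1norm f * cc k f)"
proof -
  have a: "\<bar>LL T A k n f\<bar> \<le> cc k f" by (rule LL_bound[OF k f])
  have b: "cc k f \<le> L1norm f" by (rule cc_le[OF k f])
  have "(LL T A k n f)^2 \<le> (cc k f)^2"
    using a by (metis abs_ge_zero power2_abs power_mono)
  also have "\<dots> \<le> L1norm f * cc k f"
    using b cc_nonneg[of k f] by (simp add: power2_eq_square mult_right_mono)
  finally show ?thesis unfolding tm_def by (simp add: mult_left_mono)
qed

lemma geom_fin: "finite (M::nat set) \<Longrightarrow> (\<Sum>n\<in>M. (1/2::real)^n) \<le> 2"
proof -
  assume M: "finite M"
  then obtain m where "M \<subseteq> {..<m}" by (meson finite_nat_iff_bounded)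
  then have "(\<Sum>n\<in>M. (1/2::real)^n) \<le> (\<Sum>n<m. (1/2::real)^n)"
    by (intro sum_mono2) auto
  also have "\<dots> = 2 - 2 * (1/2)^m"
    by (induction m) (auto simp: field_simps)
  also have "\<dots> \<le> 2" by simp
  finally show ?thesis .
qed

lemma sum_tm_bound:
  assumes S: "finite S" "S \<subseteq> carrier G \<times> UNIV" and f: "integrable lam01 f"
  shows "(\<Sum>i\<in>S. tm T A f i) \<le> 2 * (L1norm f)^2"
proof -
  let ?K = "fst ` S" and ?M = "snd ` S"
  have K: "finite ?K" "?K \<subseteq> carrier G" using S by auto
  have M: "finite ?M" using S by auto
  have "(\<Sum>i\<in>S. tm T A f i) \<le> (\<Sum>i\<in>?K \<times> ?M. tm T A f i)"
    using K M by (intro sum_mono2) (auto simp: tm_nonneg intro: rev_image_eqI)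
  also have "\<dots> = (\<Sum>k\<in>?K. \<Sum>n\<in>?M. tm T A f (k, n))"
    by (simp only: sum.cartesian_product case_prod_eta)
  also have "\<dots> \<le> (\<Sum>k\<in>?K. \<Sum>n\<in>?M. (1/2)^n * (L1norm f * cc k f))"
    using K by (intro sum_mono tm_bound[OF _ f]) auto
  also have "\<dots> = (\<Sum>k\<in>?K. (\<Sum>n\<in>?M. (1/2)^n) * (L1norm f * cc k f))"
    by (simp add: sum_distrib_right)
  also have "\<dots> \<le> (\<Sum>k\<in>?K. 2 * (L1norm f * cc k f))"
  proof (intro sum_mono mult_right_mono geom_fin M)
    fix k show "0 \<le> L1norm f * cc k f"
      unfolding L1norm_def using cc_nonneg by (intro mult_nonneg_nonneg integral_nonneg_AE) auto
  qed
  also have "\<dots> = 2 * L1norm f * (\<Sum>k\<in>?K. cc k f)"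
    by (simp add: sum_distrib_left mult_ac)
  also have "\<dots> \<le> 2 * L1norm f * L1norm f"
    unfolding L1norm_def using sum_cc[OF K f]
    by (intro mult_left_mono) (auto simp: L1norm_def intro: integral_nonneg_AE)
  finally show ?thesis by (simp add: power2_eq_square mult_ac)
qed

lemma tm_summable:
  assumes f: "integrable lam01 f"
  shows "tm T A f summable_on (carrier G \<times> UNIV)"
  using sum_tm_bound[OF _ _ f]
  by (intro nonneg_bdd_above_summable_on tm_nonneg) (auto simp: bdd_above_def)

lemma QQ_bound:
  assumes f: "integrable lam01 f"
  shows "QQ G T A f \<le> 2 * (L1norm f)^2"
  unfolding QQ_def using sum_tm_bound[OF _ _ f] tm_summable[OF f]
  by (intro infsum_le_finite_sums) auto

lemma QQ_nonneg: "QQ G T A f \<ge> 0"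
  unfolding QQ_def by (intro infsum_nonneg tm_nonneg)


lemma LL_lin:
  assumes k: "k \<in> carrier G" and f: "integrable lam01 f" and h: "integrable lam01 h"
  shows "LL T A k n (\<lambda>x. a * f x + b * h x) = a * LL T A k n f + b * LL T A k n h"
proof -
  let ?C = "A \<inter> {..qs n}"
  have "LL T A k n (\<lambda>x. a * f x + b * h x) =
     (\<integral>y. a * (indicator ?C (T k y) * f y) + b * (indicator ?C (T k y) * h y) \<partial>lam01)"
    unfolding LL_def by (simp add: algebra_simps)
  also have "\<dots> = a * LL T A k n f + b * LL T A k n h"
    unfolding LL_def using ind_int[OF k C_sets f] ind_int[OF k C_sets h] by simp
  finally show ?thesis .
qed

lemma QQ_induced:
  assumes h: "h \<in> carrier G" and f: "integrable lam01 f"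
  shows "QQ G T A (induced_op G T h f) = QQ G T A f"
proof -
  interpret group G by (rule grp)
  let ?p = "\<lambda>(k::'g, n::nat). (k \<otimes> h, n)"
  have "QQ G T A (induced_op G T h f) = infsum (\<lambda>i. tm T A f (?p i)) (carrier G \<times> UNIV)"
    unfolding QQ_def
    by (intro infsum_cong) (auto simp: tm_def LL_induced[OF h _ f])
  also have "\<dots> = QQ G T A f" unfolding QQ_def
  proof (rule infsum_reindex_bij_betw)
    show "bij_betw ?p (carrier G \<times> UNIV) (carrier G \<times> UNIV)"
      by (rule bij_betw_byWitness[where f'="\<lambda>(k, n). (k \<otimes> inv h, n)"])
         (auto simp: h m_assoc)
  qed
  finally show ?thesis .
qed

lemma cover: "AE y in lam01. \<exists>k\<in>carrier G. T k y \<in> A"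
proof -
  interpret group G by (rule grp)
  let ?U = "\<Union>g\<in>carrier G. T g ` A"
  let ?D = "({0..1} - ?U) \<union> (?U - {0..1})"
  have U: "?U \<in> sets lam01"
    using cnt T_image_sets A_sets by (intro sets.countable_UN'') auto
  have D: "?D \<in> sets lam01"
    using U by (intro sets.Un sets.Diff) (auto simp: sets_lam01)
  have "emeasure lam01 ?D = 0" using fd unfolding fundamental_domain_def by blast
  then have "?D \<in> null_sets lam01" using D by auto
  from AE_not_in[OF this] show ?thesis
  proof (rule AE_mp[OF _ AE_I2], intro impI)
    fix y assume y: "y \<in> space lam01" and nD: "y \<notin> ?D"
    then have "y \<in> ?U" by auto
    then obtain g a where g: "g \<in> carrier G" and a: "a \<in> A" and ya: "y = T g a" by auto
    have "T (inv g) y = a" using ya T_inv1[OF g] a A_sub by auto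
    then show "\<exists>k\<in>carrier G. T k y \<in> A" using g a by (intro bexI[of _ "inv g"]) auto
  qed
qed

lemma LL_zero_imp:
  assumes f: "integrable lam01 f" and z: "\<And>k n. k \<in> carrier G \<Longrightarrow> LL T A k n f = 0"
  shows "AE y in lam01. f y = 0"
proof -
  interpret group G by (rule grp)
  have fm: "f \<in> borel_measurable lam01" using f by auto
  have each: "AE y in lam01. T k y \<in> A \<longrightarrow> f y = 0" if k: "k \<in> carrier G" for k
  proof -
    have ki: "inv k \<in> carrier G" using k by simp
    define u where "u = induced_op G T k f"
    have ui: "integrable lam01 u" unfolding u_def by (rule induced_int[OF k f])
    have Au: "integrable lam01 (\<lambda>x. indicator A x * u x)"
      using ui A_sets by (rule integrable_ind_mult[rotated])
    have "(\<integral>x. indicator {..q} x * (indicator A x * u x) \<partial>lam01) = 0" if q: "q \<in> \<rat>" for q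
    proof -
      obtain n where n: "qs n = q" using qs_surj[OF q] by auto
      let ?C = "A \<inter> {..qs n}"
      have m: "(\<lambda>x. indicator ?C x * f (T (inv k) x)) \<in> borel_measurable lam01"
        using C_sets comp_meas[OF ki fm] by (intro borel_measurable_times borel_measurable_indicator)
      have "(\<integral>x. indicator {..q} x * (indicator A x * u x) \<partial>lam01) =
          (\<integral>x. rho T k x * (indicator ?C x * f (T (inv k) x)) \<partial>lam01)"
        unfolding u_def induced_fun n[symmetric]
        by (intro Bochner_Integration.integral_cong) (auto simp: indicator_def)
      also have "\<dots> = (\<integral>y. indicator ?C (T k y) * f (T (inv k) (T k y)) \<partial>lam01)"
        using CV(2)[OF k m] by simp
      also have "\<dots> = LL T A k n f" unfolding LL_def
        by (intro Bochner_Integration.integral_cong) (auto simp: T_inv1[OF k])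
      finally show ?thesis using z[OF k] by simp
    qed
    from inj_lam01[OF Au this] have AE0: "AE x in lam01. indicator A x * u x = 0" .
    have m2: "(\<lambda>x. indicator A x * \<bar>f (T (inv k) x)\<bar>) \<in> borel_measurable lam01"
      using A_sets comp_meas[OF ki fm] by (intro borel_measurable_times borel_measurable_indicator borel_measurable_abs)
    have "0 = (\<integral>x. indicator A x * \<bar>u x\<bar> \<partial>lam01)"
      using AE0 by (intro integral_eq_zero_AE[symmetric]) (auto elim!: AE_mp simp: indicator_def)
    also have "\<dots> = (\<integral>x. rho T k x * (indicator A x * \<bar>f (T (inv k) x)\<bar>) \<partial>lam01)"
      unfolding u_def induced_fun
      by (intro Bochner_Integration.integral_cong) (auto simp: abs_mult rho_nonneg)
    also have "\<dots> = (\<integral>y. indicator A (T k y) * \<bar>f (T (inv k) (T k y))\<bar> \<partial>lam01)"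
      using CV(2)[OF k m2] by simp
    also have "\<dots> = (\<integral>y. indicator A (T k y) * \<bar>f y\<bar> \<partial>lam01)"
      by (intro Bochner_Integration.integral_cong) (auto simp: T_inv1[OF k])
    finally have "(\<integral>y. indicator A (T k y) * \<bar>f y\<bar> \<partial>lam01) = 0" by simp
    then have "AE y in lam01. indicator A (T k y) * \<bar>f y\<bar> = 0"
      using integral_nonneg_eq_0_iff_AE[OF ind_int[OF k A_sets int_abs[OF f]]] by simp
    then show ?thesis by (rule AE_mp[OF _ AE_I2]) (auto simp: indicator_def)
  qed
  have "AE y in lam01. \<forall>k\<in>carrier G. T k y \<in> A \<longrightarrow> f y = 0"
    using each cnt by (subst AE_ball_countable) auto
  with cover show ?thesis by eventually_elim auto
qed

lemma QQ_zero:
  assumes f: "integrable lam01 f" and Q: "QQ G T A f = 0"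
  shows "AE y in lam01. f y = 0"
proof (rule LL_zero_imp[OF f])
  fix k n assume k: "k \<in> carrier G"
  have "tm T A f (k, n) = 0"
    using Q tm_summable[OF f] tm_nonneg k unfolding QQ_def
    by (intro nonneg_infsum_le_0D[where A="carrier G \<times> UNIV"]) auto
  then show "LL T A k n f = 0" unfolding tm_def by simp
qed


lemma L1_nonneg: "L1norm f \<ge> 0" unfolding L1norm_def by (intro integral_nonneg_AE) auto

lemma L1_add:
  assumes f: "integrable lam01 f" and h: "integrable lam01 h"
  shows "L1norm (\<lambda>x. f x + h x) \<le> L1norm f + L1norm h"
proof -
  have "L1norm (\<lambda>x. f x + h x) \<le> (\<integral>x. \<bar>f x\<bar> + \<bar>h x\<bar> \<partial>lam01)"
    unfolding L1norm_def using f h by (intro integral_mono) auto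
  also have "\<dots> = L1norm f + L1norm h" unfolding L1norm_def using f h by simp
  finally show ?thesis .
qed

lemma L1_mult: "L1norm (\<lambda>x. c * f x) = \<bar>c\<bar> * L1norm f"
  unfolding L1norm_def by (simp add: abs_mult)

lemma LL_mult: "LL T A k n (\<lambda>x. c * f x) = c * LL T A k n f"
  unfolding LL_def by (simp add: mult_ac)

lemma QQ_mult:
  assumes f: "integrable lam01 f"
  shows "QQ G T A (\<lambda>x. c * f x) = c^2 * QQ G T A f"
proof -
  have "QQ G T A (\<lambda>x. c * f x) = infsum (\<lambda>i. c^2 * tm T A f i) (carrier G \<times> UNIV)"
    unfolding QQ_def by (intro infsum_cong) (auto simp: tm_def LL_mult power_mult_distrib)
  also have "\<dots> = c^2 * QQ G T A f"
    unfolding QQ_def using tm_summable[OF f] by (rule infsum_cmult_right)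
  finally show ?thesis .
qed

lemma QQ_add:
  assumes f: "integrable lam01 f" and h: "integrable lam01 h"
  shows "QQ G T A (\<lambda>x. f x + h x) \<le> (sqrt (QQ G T A f) + sqrt (QQ G T A h))^2"
proof -
  have fh: "integrable lam01 (\<lambda>x. f x + h x)" using f h by auto
  show ?thesis unfolding QQ_def[of G T A "\<lambda>x. f x + h x"]
  proof (rule infsum_le_finite_sums[OF tm_summable[OF fh]])
    fix S :: "('g \<times> nat) set" assume S: "finite S" "S \<subseteq> carrier G \<times> UNIV"
    define a where "a = (\<lambda>i. sqrt ((1/2::real)^snd i) * LL T A (fst i) (snd i) f)"
    define b where "b = (\<lambda>i. sqrt ((1/2::real)^snd i) * LL T A (fst i) (snd i) h)"
    have ta: "\<And>i. (a i)^2 = tm T A f i" unfolding a_def tm_def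
      by (auto simp: power_mult_distrib split: prod.splits)
    have tb: "\<And>i. (b i)^2 = tm T A h i" unfolding b_def tm_def
      by (auto simp: power_mult_distrib split: prod.splits)
    have tab: "\<And>i. i \<in> S \<Longrightarrow> (a i + b i)^2 = tm T A (\<lambda>x. f x + h x) i"
    proof -
      fix i assume i: "i \<in> S"
      then have k: "fst i \<in> carrier G" using S by auto
      have "LL T A (fst i) (snd i) (\<lambda>x. f x + h x) = LL T A (fst i) (snd i) (\<lambda>x. 1 * f x + 1 * h x)"
        by simp
      also have "\<dots> = LL T A (fst i) (snd i) f + LL T A (fst i) (snd i) h"
        using LL_lin[OF k f h, of "snd i" 1 1] by simp
      finally have LLs: "LL T A (fst i) (snd i) (\<lambda>x. f x + h x) = LL T A (fst i) (snd i) f + LL T A (fst i) (snd i) h" .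
      have "a i + b i = sqrt ((1/2::real)^snd i) * (LL T A (fst i) (snd i) f + LL T A (fst i) (snd i) h)"
        unfolding a_def b_def by (simp add: algebra_simps)
      then have "(a i + b i)^2 = (sqrt ((1/2::real)^snd i))^2 * (LL T A (fst i) (snd i) f + LL T A (fst i) (snd i) h)^2"
        by (simp add: power_mult_distrib)
      also have "\<dots> = (1/2::real)^snd i * (LL T A (fst i) (snd i) (\<lambda>x. f x + h x))^2"
        unfolding LLs by simp
      also have "\<dots> = tm T A (\<lambda>x. f x + h x) i" unfolding tm_def by (simp add: case_prod_beta)
      finally show "(a i + b i)^2 = tm T A (\<lambda>x. f x + h x) i" .
    qed
    have "(\<Sum>i\<in>S. tm T A (\<lambda>x. f x + h x) i) = (L2_set (\<lambda>i. a i + b i) S)^2"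
      unfolding L2_set_def using tab by (simp add: sum_nonneg tm_nonneg)
    also have "\<dots> \<le> (L2_set a S + L2_set b S)^2"
      by (intro power_mono L2_set_triangle_ineq) (simp add: L2_set_def sum_nonneg)
    also have "\<dots> \<le> (sqrt (QQ G T A f) + sqrt (QQ G T A h))^2"
    proof (intro power_mono add_mono)
      show "L2_set a S \<le> sqrt (QQ G T A f)" unfolding L2_set_def QQ_def ta
        using S tm_summable[OF f] tm_nonneg by (intro real_sqrt_le_mono finite_sum_le_infsum) auto
      show "L2_set b S \<le> sqrt (QQ G T A h)" unfolding L2_set_def QQ_def tb
        using S tm_summable[OF h] tm_nonneg by (intro real_sqrt_le_mono finite_sum_le_infsum) auto
      show "0 \<le> L2_set a S + L2_set b S" by (simp add: L2_set_def sum_nonneg)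
    qed
    finally show "(\<Sum>i\<in>S. tm T A (\<lambda>x. f x + h x) i) \<le> (sqrt (QQ G T A f) + sqrt (QQ G T A h))^2" .
  qed
qed

lemma NN_triangle:
  assumes f: "integrable lam01 f" and h: "integrable lam01 h"
  shows "NN G T A (\<lambda>x. f x + h x) \<le> NN G T A f + NN G T A h"
proof -
  let ?a = "L1norm f" and ?b = "L1norm h" and ?p = "sqrt (QQ G T A f)" and ?q = "sqrt (QQ G T A h)"
  have "NN G T A (\<lambda>x. f x + h x) \<le> sqrt ((?a + ?b)^2 + (?p + ?q)^2)"
    unfolding NN_def
  proof (intro real_sqrt_le_mono add_mono)
    show "(L1norm (\<lambda>x. f x + h x))^2 \<le> (?a + ?b)^2"
      using L1_add[OF f h] L1_nonneg by (intro power_mono) auto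
    show "QQ G T A (\<lambda>x. f x + h x) \<le> (?p + ?q)^2" by (rule QQ_add[OF f h])
  qed
  also have "\<dots> \<le> sqrt (?a^2 + ?p^2) + sqrt (?b^2 + ?q^2)"
    by (rule real_sqrt_sum_squares_triangle_ineq)
  also have "\<dots> = NN G T A f + NN G T A h"
    unfolding NN_def using QQ_nonneg by simp
  finally show ?thesis .
qed

lemma NN_homog:
  assumes f: "integrable lam01 f"
  shows "NN G T A (\<lambda>x. c * f x) = \<bar>c\<bar> * NN G T A f"
proof -
  have "NN G T A (\<lambda>x. c * f x) = sqrt (c^2 * ((L1norm f)^2 + QQ G T A f))"
    unfolding NN_def L1_mult QQ_mult[OF f] by (simp add: power_mult_distrib algebra_simps)
  also have "\<dots> = \<bar>c\<bar> * NN G T A f" unfolding NN_def by (simp add: real_sqrt_mult)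
  finally show ?thesis .
qed

lemma NN_lower: "L1norm f \<le> NN G T A f"
  unfolding NN_def using QQ_nonneg L1_nonneg by (intro real_le_rsqrt) auto

lemma NN_upper:
  assumes f: "integrable lam01 f"
  shows "NN G T A f \<le> 2 * L1norm f"
proof -
  have "NN G T A f \<le> sqrt ((2 * L1norm f)^2)"
  proof -
    have "QQ G T A f \<le> 3 * (L1norm f)^2" using QQ_bound[OF f] zero_le_power2[of "L1norm f"] by linarith
    then show ?thesis unfolding NN_def by (intro real_sqrt_le_mono) (simp add: power_mult_distrib)
  qed
  also have "\<dots> = 2 * L1norm f"
    by (metis real_sqrt_abs abs_of_nonneg L1_nonneg mult_nonneg_nonneg zero_le_numeral)
  finally show ?thesis .
qed

lemma NN_inv:
  assumes h: "h \<in> carrier G" and f: "integrable lam01 f"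
  shows "NN G T A (induced_op G T h f) = NN G T A f"
  unfolding NN_def L1_induced[OF h f] QQ_induced[OF h f] ..

lemma NN_strict:
  assumes f: "integrable lam01 f" and h: "integrable lam01 h"
    and ne: "\<not> (AE x in lam01. f x = h x)" and eq: "NN G T A f = NN G T A h"
  shows "NN G T A (\<lambda>x. (f x + h x) / 2) < NN G T A f"
proof -
  define m where "m = (\<lambda>x. (f x + h x) / 2)"
  define d where "d = (\<lambda>x. (f x - h x) / 2)"
  have mi: "integrable lam01 m" and di: "integrable lam01 d" unfolding m_def d_def using f h by auto
  have tmd: "tm T A m i + tm T A d i = (tm T A f i + tm T A h i) / 2" if i: "i \<in> carrier G \<times> UNIV" for i
  proof -
    obtain k n where kn: "i = (k, n)" by force
    have k: "k \<in> carrier G" using i kn by auto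
    have "LL T A k n m = LL T A k n (\<lambda>x. (1/2) * f x + (1/2) * h x)"
      unfolding m_def by (simp add: field_simps)
    also have "\<dots> = (1/2) * LL T A k n f + (1/2) * LL T A k n h" by (rule LL_lin[OF k f h])
    finally have lm: "LL T A k n m = (1/2) * LL T A k n f + (1/2) * LL T A k n h" .
    have "LL T A k n d = LL T A k n (\<lambda>x. (1/2) * f x + (-1/2) * h x)"
      unfolding d_def by (simp add: field_simps)
    also have "\<dots> = (1/2) * LL T A k n f + (-1/2) * LL T A k n h" by (rule LL_lin[OF k f h])
    finally have ld: "LL T A k n d = (1/2) * LL T A k n f + (-1/2) * LL T A k n h" .
    have alg: "\<And>(w::real) a b. w * ((1/2) * a + (1/2) * b)^2 + w * ((1/2) * a + (-1/2) * b)^2 = (w * a^2 + w * b^2) / 2"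
      by (simp add: power2_eq_square field_simps)
    show ?thesis unfolding kn tm_def prod.case lm ld by (rule alg)
  qed
  have QQmd: "QQ G T A m + QQ G T A d = (QQ G T A f + QQ G T A h) / 2"
  proof -
    have "QQ G T A m + QQ G T A d = infsum (\<lambda>i. tm T A m i + tm T A d i) (carrier G \<times> UNIV)"
      unfolding QQ_def using tm_summable[OF mi] tm_summable[OF di] by (simp add: infsum_add)
    also have "\<dots> = infsum (\<lambda>i. (1/2) * (tm T A f i + tm T A h i)) (carrier G \<times> UNIV)"
      using tmd by (intro infsum_cong) auto
    also have "\<dots> = (1/2) * infsum (\<lambda>i. tm T A f i + tm T A h i) (carrier G \<times> UNIV)"
      using tm_summable[OF f] tm_summable[OF h] by (intro infsum_cmult_right summable_on_add)
    also have "\<dots> = (QQ G T A f + QQ G T A h) / 2"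
      unfolding QQ_def using tm_summable[OF f] tm_summable[OF h] by (simp add: infsum_add)
    finally show ?thesis .
  qed
  have Qd: "QQ G T A d > 0"
  proof (rule ccontr)
    assume "\<not> QQ G T A d > 0"
    then have "QQ G T A d = 0" using QQ_nonneg[of d] by simp
    from QQ_zero[OF di this] have "AE x in lam01. f x = h x"
      by (rule AE_mp[OF _ AE_I2]) (auto simp: d_def)
    then show False using ne by simp
  qed
  have am: "L1norm m \<le> (L1norm f + L1norm h) / 2"
  proof -
    have e: "(\<lambda>x. (f x + h x) / 2) = (\<lambda>x. (1/2) * (f x + h x))" by (auto simp: fun_eq_iff)
    have "L1norm m = (1/2) * L1norm (\<lambda>x. f x + h x)" unfolding m_def e using L1_mult[of "1/2" "\<lambda>x. f x + h x"] by simp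
    then show ?thesis using L1_add[OF f h] by simp
  qed
  have am2: "(L1norm m)^2 \<le> ((L1norm f + L1norm h) / 2)^2"
    using am L1_nonneg[of m] by (intro power_mono) auto
  have conv: "((L1norm f + L1norm h) / 2)^2 \<le> ((L1norm f)^2 + (L1norm h)^2) / 2"
  proof -
    have "((L1norm f + L1norm h) / 2)^2 = ((L1norm f)^2 + (L1norm h)^2) / 2 - ((L1norm f - L1norm h) / 2)^2"
      by (simp add: power2_eq_square field_simps)
    then show ?thesis using zero_le_power2[of "(L1norm f - L1norm h) / 2"] by linarith
  qed
  have Nf2: "(NN G T A f)^2 = (L1norm f)^2 + QQ G T A f"
    unfolding NN_def using QQ_nonneg by simp
  have Nh2: "(NN G T A h)^2 = (L1norm h)^2 + QQ G T A h"
    unfolding NN_def using QQ_nonneg by simp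
  have "(L1norm m)^2 + QQ G T A m < (NN G T A f)^2"
    using am2 conv QQmd Qd Nf2 Nh2 eq by simp
  then have "sqrt ((L1norm m)^2 + QQ G T A m) < sqrt ((NN G T A f)^2)"
    by (rule real_sqrt_less_mono)
  moreover have "sqrt ((NN G T A f)^2) = NN G T A f"
    unfolding NN_def using QQ_nonneg[of f] by simp
  ultimately have "NN G T A m < NN G T A f" unfolding NN_def[of G T A m] by simp
  then show ?thesis unfolding m_def .
qed

end

theorem proposition5p2:
  fixes G :: "('g, 'b) monoid_scheme" and T :: "'g \<Rightarrow> real \<Rightarrow> real" and A :: "real set"
  assumes "group G" and "countable (carrier G)"
    and "mcp_action G T"
    and "fundamental_domain G T A"
  shows "\<exists>N :: (real \<Rightarrow> real) \<Rightarrow> real.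
     \<comment> \<open>N is a norm on L1[0,1] (elements represented by integrable functions)\<close>
     (\<forall>f h. integrable lam01 f \<longrightarrow> integrable lam01 h \<longrightarrow> N (\<lambda>x. f x + h x) \<le> N f + N h) \<and>
     (\<forall>f c. integrable lam01 f \<longrightarrow> N (\<lambda>x. c * f x) = \<bar>c\<bar> * N f) \<and>
     \<comment> \<open>equivalent to the L1 norm\<close>
     (\<exists>c C. 0 < c \<and> 0 < C \<and>
        (\<forall>f. integrable lam01 f \<longrightarrow> c * L1norm f \<le> N f \<and> N f \<le> C * L1norm f)) \<and>
     \<comment> \<open>G-invariant\<close>
     (\<forall>g\<in>carrier G. \<forall>f. integrable lam01 f \<longrightarrow> N (induced_op G T g f) = N f) \<and>
     \<comment> \<open>strictly convex\<close>
     (\<forall>f h. integrable lam01 f \<longrightarrow> integrable lam01 h \<longrightarrow>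
        \<not> (AE x in lam01. f x = h x) \<longrightarrow> N f = N h \<longrightarrow>
        N (\<lambda>x. (f x + h x) / 2) < N f)"
proof -
  interpret F: fdact G T A by (rule fdact.intro[OF assms])
  have 1: "\<forall>f h. integrable lam01 f \<longrightarrow> integrable lam01 h \<longrightarrow>
      NN G T A (\<lambda>x. f x + h x) \<le> NN G T A f + NN G T A h"
    using F.NN_triangle by blast
  have 2: "\<forall>f c. integrable lam01 f \<longrightarrow> NN G T A (\<lambda>x. c * f x) = \<bar>c\<bar> * NN G T A f"
    using F.NN_homog by blast
  have 3: "\<exists>c C. 0 < c \<and> 0 < C \<and>
        (\<forall>f. integrable lam01 f \<longrightarrow> c * L1norm f \<le> NN G T A f \<and> NN G T A f \<le> C * L1norm f)"
    by (rule exI[of _ 1], rule exI[of _ 2]) (auto intro: F.NN_lower F.NN_upper)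
  have 4: "\<forall>g\<in>carrier G. \<forall>f. integrable lam01 f \<longrightarrow> NN G T A (induced_op G T g f) = NN G T A f"
    using F.NN_inv by blast
  have 5: "\<forall>f h. integrable lam01 f \<longrightarrow> integrable lam01 h \<longrightarrow>
        \<not> (AE x in lam01. f x = h x) \<longrightarrow> NN G T A f = NN G T A h \<longrightarrow>
        NN G T A (\<lambda>x. (f x + h x) / 2) < NN G T A f"
    using F.NN_strict by blast
  show ?thesis using 1 2 3 4 5 by (intro exI[of _ "NN G T A"]) blast
qed

end
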